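(* Let $h$ be a bilinear form on $V$. Then: (1) for $0\leq p\leq n$, $*\Big(\frac{g^{n-p}h^p}{(n-p)!\,p!}\Big)=i_{\frac{h^p}{p!}}\Big(\frac{g^p}{p!}\Big)$; (2) for $0\leq p\leq n-1$, $*\Big(\frac{g^{n-p-1}h^p}{(n-p-1)!\,p!}\Big)=i_{\frac{h^p}{p!}}\Big(\frac{g^{p+1}}{(p+1)!}\Big)$; (3) more generally, for integers $r\geq 0$ and $0\leq p\leq n-r$, $*\Big(\frac{g^{n-p-r}h^p}{(n-p-r)!\,p!}\Big)=i_{\frac{h^p}{p!}}\Big(\frac{g^{p+r}}{(p+r)!}\Big)$.
   Context: $(V,g)$ is an oriented Euclidean real vector space of dimension $n$. Double forms: elements of $\bigoplus_{p,q}\Lambda^pV^*\otimes\Lambda^qV^*$, a $(p,q)$ double form viewed as a bilinear form on $\Lambda^pV\times\Lambda^qV$, with the inner product induced by $g$ (for an orthonormal basis, the $e_I^*\otimes e_J^*$ with strictly increasing multi-indices are orthonormal). Exterior product: $(\theta_1\otimes\theta_2)(\theta_3\otimes\theta_4)=(\theta_1\wedge\theta_3)\otimes(\theta_2\wedge\theta_4)$; $g$ and $h$ are $(1,1)$ double forms and powers are for this product ($h^0=g^0=1$). $i_\psi$ is the adjoint of left exterior multiplication by $\psi$. The double Hodge star sends a $(p,q)$ double form $\omega$ to the $(n-p,n-q)$ double form $*\omega(u_1,u_2)=(-1)^{(p+q)(n-p-q)}\omega( *u_1,*u_2)$, with $*$ the usual Hodge star of $\Lambda V$. *)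

theory Defs
  imports Complex_Main
begin

text \<open>Coordinate model: V = R^n with its standard inner product and standard orientation,
  orthonormal basis e_0,...,e_{n-1}.  A double form is represented by its coefficients
  w.r.t. the orthonormal basis e_I^* (x) e_J^* (I, J strictly increasing multi-indices,
  i.e. finite subsets of {..<n}); the coefficient at (I,J) equals omega(e_I, e_J).\<close>

type_synonym dform = "nat set \<Rightarrow> nat set \<Rightarrow> real"

text \<open>Sign with e_I wedge e_J = wsign I J * e_(I union J) for disjoint I, J.\<close>
definition wsign :: "nat set \<Rightarrow> nat set \<Rightarrow> real" where
  "wsign I J = (-1) ^ card {(i, j). i \<in> I \<and> j \<in> J \<and> j < i}"

text \<open>Exterior product of double forms (bilinear extension of
  (a1 (x) a2)(b1 (x) b2) = (a1 wedge b1) (x) (a2 wedge b2)).\<close>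
definition dmult :: "dform \<Rightarrow> dform \<Rightarrow> dform" where
  "dmult a b = (\<lambda>K L. \<Sum>I\<in>Pow K. \<Sum>J\<in>Pow L.
      wsign I (K - I) * wsign J (L - J) * a I J * b (K - I) (L - J))"

definition dscale :: "real \<Rightarrow> dform \<Rightarrow> dform" where
  "dscale c a = (\<lambda>I J. c * a I J)"

definition dunit :: dform where
  "dunit = (\<lambda>I J. if I = {} \<and> J = {} then 1 else 0)"

primrec dpow :: "dform \<Rightarrow> nat \<Rightarrow> dform" where
  "dpow a 0 = dunit"
| "dpow a (Suc k) = dmult a (dpow a k)"

text \<open>Inner product induced by g: the e_I^* (x) e_J^* are orthonormal.\<close>
definition dinner :: "nat \<Rightarrow> dform \<Rightarrow> dform \<Rightarrow> real" where
  "dinner n a b = (\<Sum>I\<in>Pow {..<n}. \<Sum>J\<in>Pow {..<n}. a I J * b I J)"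

definition dbasis :: "nat set \<Rightarrow> nat set \<Rightarrow> dform" where
  "dbasis K L = (\<lambda>I J. if I = K \<and> J = L then 1 else 0)"

text \<open>i_psi: adjoint of left exterior multiplication by psi, i.e.
  <i_psi w, theta> = <w, psi theta>; its coefficient at (K,L) is <w, psi (e_K (x) e_L)>.\<close>
definition dinterior :: "nat \<Rightarrow> dform \<Rightarrow> dform \<Rightarrow> dform" where
  "dinterior n psi w = (\<lambda>K L. if K \<subseteq> {..<n} \<and> L \<subseteq> {..<n}
      then dinner n w (dmult psi (dbasis K L)) else 0)"

definition metric :: "nat \<Rightarrow> dform" where
  "metric n = (\<lambda>I J. if \<exists>i<n. I = {i} \<and> J = {i} then 1 else 0)"

definition bilform :: "nat \<Rightarrow> (nat \<Rightarrow> nat \<Rightarrow> real) \<Rightarrow> dform" where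
  "bilform n H = (\<lambda>I J. if (\<exists>i<n. I = {i}) \<and> (\<exists>j<n. J = {j})
      then H (the_elem I) (the_elem J) else 0)"

text \<open>Hodge star on Lambda V: *e_K = wsign K K^c e_(K^c).
  For w of type (p,q): ( *w)(u1,u2) = (-1)^((p+q)(n-p-q)) w( *u1, *u2), applied
  componentwise; at (K,L) the relevant component has p = |K^c|, q = |L^c|.\<close>
definition dstar :: "nat \<Rightarrow> dform \<Rightarrow> dform" where
  "dstar n w = (\<lambda>K L. if K \<subseteq> {..<n} \<and> L \<subseteq> {..<n} then
      (let Kc = {..<n} - K; Lc = {..<n} - L; k = int (card Kc + card Lc) in
        (-1) ^ nat \<bar>k * (int n - k)\<bar> * wsign K Kc * wsign L Lc * w Kc Lc)
      else 0)"

end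

theory Submission
  imports Defs
begin

definition wpairs :: "nat set \<Rightarrow> nat set \<Rightarrow> (nat \<times> nat) set" where
  "wpairs A B = {(i, j). i \<in> A \<and> j \<in> B \<and> j < i}"

lemma wsign_wp: "wsign A B = (-1) ^ card (wpairs A B)"
  by (simp add: wsign_def wpairs_def)

lemma wpairs_fin: "finite A \<Longrightarrow> finite B \<Longrightarrow> finite (wpairs A B)"
  by (rule finite_subset[of _ "A \<times> B"]) (auto simp: wpairs_def)

lemma wsign_un_r:
  assumes "finite A" "finite B" "finite C" "B \<inter> C = {}"
  shows "wsign A (B \<union> C) = wsign A B * wsign A C"
proof -
  have e: "wpairs A (B \<union> C) = wpairs A B \<union> wpairs A C" by (auto simp: wpairs_def)
  have d: "wpairs A B \<inter> wpairs A C = {}" using assms(4) by (auto simp: wpairs_def)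
  show ?thesis unfolding wsign_wp e
    using card_Un_disjoint[OF wpairs_fin wpairs_fin d] assms by (simp add: power_add)
qed

lemma wsign_un_l:
  assumes "finite A" "finite B" "finite C" "B \<inter> C = {}"
  shows "wsign (B \<union> C) A = wsign B A * wsign C A"
proof -
  have e: "wpairs (B \<union> C) A = wpairs B A \<union> wpairs C A" by (auto simp: wpairs_def)
  have d: "wpairs B A \<inter> wpairs C A = {}" using assms(4) by (auto simp: wpairs_def)
  show ?thesis unfolding wsign_wp e
    using card_Un_disjoint[OF wpairs_fin wpairs_fin d] assms by (simp add: power_add)
qed

lemma wsign_sq: "wsign A B * wsign A B = 1"
  by (simp add: wsign_def flip: power_add)

lemma wsign_swap:
  assumes "finite A" "finite B" "A \<inter> B = {}"
  shows "wsign A B * wsign B A = (-1) ^ (card A * card B)"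
proof -
  let ?T = "(\<lambda>(i,j). (j,i)) ` wpairs B A"
  have u: "wpairs A B \<union> ?T = A \<times> B"
    using assms(3) by (auto simp: wpairs_def image_iff)
  have d: "wpairs A B \<inter> ?T = {}" by (auto simp: wpairs_def)
  have ft: "finite ?T" using wpairs_fin assms by auto
  have ct: "card ?T = card (wpairs B A)"
    by (rule card_image) (auto simp: inj_on_def)
  have "card (wpairs A B) + card (wpairs B A) = card A * card B"
    using card_Un_disjoint[OF wpairs_fin[OF assms(1,2)] ft d] u ct
    by (simp add: card_cartesian_product)
  then show ?thesis unfolding wsign_wp by (metis power_add)
qed

lemma sign_key:
  assumes "finite I" "finite X" "finite K" "I \<inter> X = {}" "I \<inter> K = {}" "X \<inter> K = {}"
  shows "wsign K (I \<union> X) * wsign I X * wsign X K = wsign I (X \<union> K) * (-1) ^ (card K * card (I \<union> X))"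
proof -
  have a: "wsign K (I \<union> X) = wsign K I * wsign K X" using assms by (simp add: wsign_un_r)
  have b: "wsign I (X \<union> K) = wsign I X * wsign I K" using assms by (simp add: wsign_un_r)
  have c: "wsign K X * wsign X K = (-1) ^ (card K * card X)" using assms wsign_swap[of K X] by (simp add: Int_commute)
  have d: "wsign I K * wsign K I = (-1) ^ (card I * card K)" using assms wsign_swap[of I K] by simp
  have e: "card (I \<union> X) = card I + card X" using assms card_Un_disjoint by blast
  have s: "wsign I K * wsign I K = 1" by (rule wsign_sq)
  have "wsign K (I \<union> X) * wsign I X * wsign X K = wsign K I * wsign I X * (-1) ^ (card K * card X)"
    using a c by (simp add: algebra_simps)
  also have "wsign K I = wsign I K * (-1) ^ (card I * card K)"
    using d s by (metis mult.assoc mult_1 mult.commute)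
  finally show ?thesis using b e by (simp add: algebra_simps power_add add_mult_distrib2)
qed

lemma sum_single: "finite S \<Longrightarrow> (\<And>x. x \<in> S \<Longrightarrow> x \<noteq> a \<Longrightarrow> f x = 0) \<Longrightarrow> sum f S = (if a \<in> S then f a else 0)"
  by (cases "a \<in> S") (auto simp: sum.remove intro!: sum.neutral)

lemma dmult_inf: assumes "\<not> (finite K \<and> finite L)" shows "dmult a b K L = 0"
proof (cases "finite K")
  case False then show ?thesis by (simp add: dmult_def)
next
  case True then have "infinite L" using assms by simp
  then show ?thesis by (simp add: dmult_def)
qed

lemma sum_pow_singletons:
  assumes "finite K" "\<And>I. I \<subseteq> K \<Longrightarrow> (\<forall>i\<in>K\<inter>S. I \<noteq> {i}) \<Longrightarrow> f I = 0"
  shows "(\<Sum>I\<in>Pow K. f I) = (\<Sum>i\<in>K\<inter>S. f {i})"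
proof -
  have "(\<Sum>I\<in>Pow K. f I) = (\<Sum>I\<in>(\<lambda>i. {i}) ` (K\<inter>S). f I)"
    by (rule sum.mono_neutral_right) (use assms in auto)
  also have "\<dots> = (\<Sum>i\<in>K\<inter>S. f {i})" by (subst sum.reindex) (auto simp: inj_on_def)
  finally show ?thesis .
qed

lemma metric_eq: "metric n = bilform n (\<lambda>i j. if i = j then 1 else 0)"
  by (auto simp: metric_def bilform_def fun_eq_iff)

lemma bilform_mult:
  assumes "finite K" "finite L"
  shows "dmult (bilform n H) F K L = (\<Sum>i\<in>K\<inter>{..<n}. \<Sum>j\<in>L\<inter>{..<n}.
     wsign {i} (K-{i}) * wsign {j} (L-{j}) * H i j * F (K-{i}) (L-{j}))"
proof -
  have "dmult (bilform n H) F K L = (\<Sum>i\<in>K\<inter>{..<n}. \<Sum>J\<in>Pow L.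
      wsign {i} (K - {i}) * wsign J (L - J) * bilform n H {i} J * F (K - {i}) (L - J))"
    unfolding dmult_def
    by (rule sum_pow_singletons[OF assms(1)]) (force simp: bilform_def intro!: sum.neutral)
  also have "\<dots> = (\<Sum>i\<in>K\<inter>{..<n}. \<Sum>j\<in>L\<inter>{..<n}.
     wsign {i} (K-{i}) * wsign {j} (L-{j}) * H i j * F (K-{i}) (L-{j}))"
  proof (rule sum.cong[OF refl])
    fix i assume i: "i \<in> K\<inter>{..<n}"
    have "(\<Sum>J\<in>Pow L. wsign {i} (K - {i}) * wsign J (L - J) * bilform n H {i} J * F (K - {i}) (L - J))
      = (\<Sum>j\<in>L\<inter>{..<n}. wsign {i} (K - {i}) * wsign {j} (L - {j}) * bilform n H {i} {j} * F (K - {i}) (L - {j}))"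
      by (rule sum_pow_singletons[OF assms(2)]) (auto simp: bilform_def)
    also have "\<dots> = (\<Sum>j\<in>L\<inter>{..<n}. wsign {i} (K-{i}) * wsign {j} (L-{j}) * H i j * F (K-{i}) (L-{j}))"
      using i by (intro sum.cong) (auto simp: bilform_def)
    finally show "(\<Sum>J\<in>Pow L. wsign {i} (K - {i}) * wsign J (L - J) * bilform n H {i} J * F (K - {i}) (L - J)) = \<dots>" .
  qed
  finally show ?thesis .
qed

lemma gpow: "dpow (metric n) k = (\<lambda>I J. if I = J \<and> I \<subseteq> {..<n} \<and> card I = k then fact k else 0)"
proof (induction k)
  case 0
  show ?case by (auto simp: dunit_def fun_eq_iff finite_subset)
next
  case (Suc k)
  show ?case
  proof (intro ext)
    fix K L
    show "dpow (metric n) (Suc k) K L = (if K = L \<and> K \<subseteq> {..<n} \<and> card K = Suc k then fact (Suc k) else 0)"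
    proof (cases "finite K \<and> finite L")
      case False
      then have "\<not> (K = L \<and> K \<subseteq> {..<n})" using finite_subset by blast
      then show ?thesis using False by (auto simp: dmult_inf)
    next
      case True
      have "dpow (metric n) (Suc k) K L = (\<Sum>i\<in>K\<inter>{..<n}. \<Sum>j\<in>L\<inter>{..<n}.
         wsign {i} (K-{i}) * wsign {j} (L-{j}) * (if i = j then 1 else 0) * dpow (metric n) k (K-{i}) (L-{j}))"
        using True by (simp add: metric_eq bilform_mult)
      also have "\<dots> = (\<Sum>i\<in>K\<inter>{..<n}. if i \<in> L\<inter>{..<n} then
          wsign {i} (K-{i}) * wsign {i} (L-{i}) * dpow (metric n) k (K-{i}) (L-{i}) else 0)"
      proof (rule sum.cong[OF refl])
        fix i assume "i \<in> K \<inter> {..<n}"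
        show "(\<Sum>j\<in>L\<inter>{..<n}. wsign {i} (K-{i}) * wsign {j} (L-{j}) * (if i = j then 1 else 0) * dpow (metric n) k (K-{i}) (L-{j}))
          = (if i \<in> L\<inter>{..<n} then wsign {i} (K-{i}) * wsign {i} (L-{i}) * dpow (metric n) k (K-{i}) (L-{i}) else 0)"
          using True by (subst sum_single[where a=i]) auto
      qed
      also have "\<dots> = (\<Sum>i\<in>K\<inter>{..<n}. if K = L \<and> K \<subseteq> {..<n} \<and> card K = Suc k then fact k else 0)"
      proof (intro sum.cong refl)
        fix i assume i: "i \<in> K \<inter> {..<n}"
        show "(if i \<in> L\<inter>{..<n} then wsign {i} (K-{i}) * wsign {i} (L-{i}) * dpow (metric n) k (K-{i}) (L-{i}) else 0)
          = (if K = L \<and> K \<subseteq> {..<n} \<and> card K = Suc k then fact k else 0)"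
        proof (cases "K = L")
          case False
          have "K - {i} \<noteq> L - {i}" if "i \<in> L" using False i that by blast
          then show ?thesis using False by (auto simp: Suc.IH)
        next
          case KL: True
          have "(K - {i} \<subseteq> {..<n} \<and> card (K - {i}) = k) = (K \<subseteq> {..<n} \<and> card K = Suc k)"
          proof -
            have c: "card (K - {i}) = card K - 1" using i True by (simp add: card_Diff_singleton)
            have "card K > 0" using i True card_gt_0_iff by blast
            then show ?thesis using c i by auto
          qed
          then show ?thesis using KL i by (simp add: Suc.IH wsign_sq)
        qed
      qed
      also have "\<dots> = (if K = L \<and> K \<subseteq> {..<n} \<and> card K = Suc k then fact (Suc k) else 0)"
      proof (cases "K = L \<and> K \<subseteq> {..<n} \<and> card K = Suc k")
        case True
        then have "K \<inter> {..<n} = K" by auto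
        then show ?thesis using True by simp
      next
        case False
        show ?thesis by (simp only: if_not_P[OF False]) simp
      qed
      finally show ?thesis .
    qed
  qed
qed

lemma sum_nz: "sum f A \<noteq> 0 \<Longrightarrow> \<exists>a\<in>A. f a \<noteq> 0"
  by (meson sum.neutral)

lemma hpow_supp: "dpow (bilform n H) p X Y \<noteq> 0 \<Longrightarrow> X \<subseteq> {..<n} \<and> Y \<subseteq> {..<n} \<and> card X = p \<and> card Y = p"
proof (induction p arbitrary: X Y)
  case 0
  then show ?case by (simp add: dunit_def split: if_splits)
next
  case (Suc p)
  have fin: "finite X" "finite Y" using Suc.prems dmult_inf by fastforce+
  then have S: "(\<Sum>i\<in>X\<inter>{..<n}. \<Sum>j\<in>Y\<inter>{..<n}.
     wsign {i} (X-{i}) * wsign {j} (Y-{j}) * H i j * dpow (bilform n H) p (X-{i}) (Y-{j})) \<noteq> 0"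
    using Suc.prems by (simp add: bilform_mult)
  obtain i j where ij: "i \<in> X" "i < n" "j \<in> Y" "j < n" "dpow (bilform n H) p (X-{i}) (Y-{j}) \<noteq> 0"
  proof -
    assume a: "\<And>i j. i \<in> X \<Longrightarrow> i < n \<Longrightarrow> j \<in> Y \<Longrightarrow> j < n \<Longrightarrow> dpow (bilform n H) p (X-{i}) (Y-{j}) \<noteq> 0 \<Longrightarrow> thesis"
    from sum_nz[OF S] obtain i where i: "i \<in> X\<inter>{..<n}" and S2:
      "(\<Sum>j\<in>Y\<inter>{..<n}. wsign {i} (X-{i}) * wsign {j} (Y-{j}) * H i j * dpow (bilform n H) p (X-{i}) (Y-{j})) \<noteq> 0" by blast
    from sum_nz[OF S2] obtain j where j: "j \<in> Y\<inter>{..<n}" and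
      "wsign {i} (X-{i}) * wsign {j} (Y-{j}) * H i j * dpow (bilform n H) p (X-{i}) (Y-{j}) \<noteq> 0" by blast
    then have "dpow (bilform n H) p (X-{i}) (Y-{j}) \<noteq> 0" by auto
    then show thesis using a i j by blast
  qed
  from Suc.IH[OF ij(5)] have "X - {i} \<subseteq> {..<n}" "Y - {j} \<subseteq> {..<n}" "card (X-{i}) = p" "card (Y-{j}) = p"
    by auto
  moreover have "card (X - {i}) = card X - 1" "card (Y - {j}) = card Y - 1"
    using ij fin by (simp_all add: card_Diff_singleton)
  moreover have "card X > 0" "card Y > 0" using ij fin card_gt_0_iff by blast+
  ultimately show ?case using ij by auto
qed

definition Gf :: "nat \<Rightarrow> nat \<Rightarrow> dform" where
  "Gf n k = (\<lambda>I J. if I = J \<and> I \<subseteq> {..<n} \<and> card I = k then 1 else 0)"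

lemma G_eq: "dscale (1 / fact k) (dpow (metric n) k) = Gf n k"
  by (auto simp: gpow dscale_def Gf_def fun_eq_iff)

lemma lhs_sum:
  assumes "P \<subseteq> {..<n}" "Q \<subseteq> {..<n}"
  shows "dmult (Gf n m) \<psi> P Q = (\<Sum>I\<in>{I. I \<subseteq> P \<inter> Q \<and> card I = m}.
     wsign I (P-I) * wsign I (Q-I) * \<psi> (P-I) (Q-I))"
proof -
  have fP: "finite P" "finite Q" using assms finite_subset by auto
  have "dmult (Gf n m) \<psi> P Q = (\<Sum>I\<in>Pow P. if I \<subseteq> Q \<and> card I = m then
      wsign I (P-I) * wsign I (Q-I) * \<psi> (P-I) (Q-I) else 0)"
    unfolding dmult_def
  proof (rule sum.cong[OF refl])
    fix I assume I: "I \<in> Pow P"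
    show "(\<Sum>J\<in>Pow Q. wsign I (P - I) * wsign J (Q - J) * Gf n m I J * \<psi> (P - I) (Q - J)) =
      (if I \<subseteq> Q \<and> card I = m then wsign I (P-I) * wsign I (Q-I) * \<psi> (P-I) (Q-I) else 0)"
      using fP I assms by (subst sum_single[where a=I]) (auto simp: Gf_def)
  qed
  also have "\<dots> = (\<Sum>I\<in>{I\<in>Pow P. I \<subseteq> Q \<and> card I = m}. wsign I (P-I) * wsign I (Q-I) * \<psi> (P-I) (Q-I))"
    by (rule sum.inter_filter[symmetric]) (use fP in auto)
  also have "{I\<in>Pow P. I \<subseteq> Q \<and> card I = m} = {I. I \<subseteq> P \<inter> Q \<and> card I = m}" by auto
  finally show ?thesis .
qed

lemma DAA:
  assumes "finite A"
  shows "dmult \<psi> (dbasis K L) A A = (if K \<subseteq> A \<and> L \<subseteq> A then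
     wsign (A-K) K * wsign (A-L) L * \<psi> (A-K) (A-L) else 0)"
proof -
  have "dmult \<psi> (dbasis K L) A A = (\<Sum>I\<in>Pow A.
      wsign I (A - I) * wsign (A-L) (A - (A-L)) * \<psi> I (A-L) * dbasis K L (A - I) (A - (A-L)))"
    unfolding dmult_def
  proof (rule sum.cong[OF refl])
    fix I assume I: "I \<in> Pow A"
    have "J = A - L" if "J \<subseteq> A" "A - J = L" for J using that by blast
    then show "(\<Sum>J\<in>Pow A. wsign I (A - I) * wsign J (A - J) * \<psi> I J * dbasis K L (A - I) (A - J)) =
      wsign I (A - I) * wsign (A-L) (A - (A-L)) * \<psi> I (A-L) * dbasis K L (A - I) (A - (A-L))"
      using assms by (subst sum_single[where a="A-L"]) (auto simp: dbasis_def)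
  qed
  also have "\<dots> = wsign (A-K) (A - (A-K)) * wsign (A-L) (A - (A-L)) * \<psi> (A-K) (A-L) * dbasis K L (A - (A-K)) (A - (A-L))"
  proof -
    have "I = A - K" if "I \<subseteq> A" "A - I = K" for I using that by blast
    then show ?thesis using assms by (subst sum_single[where a="A-K"]) (auto simp: dbasis_def)
  qed
  also have "\<dots> = (if K \<subseteq> A \<and> L \<subseteq> A then
     wsign (A-K) K * wsign (A-L) L * \<psi> (A-K) (A-L) else 0)"
  proof -
    have e: "A - (A - K) = K \<longleftrightarrow> K \<subseteq> A" "A - (A - L) = L \<longleftrightarrow> L \<subseteq> A" by auto
    show ?thesis unfolding dbasis_def using e by auto
  qed
  finally show ?thesis .
qed

lemma rhs_sum:
  assumes "K \<subseteq> {..<n}" "L \<subseteq> {..<n}"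
  shows "dinterior n \<psi> (Gf n q) K L = (\<Sum>A\<in>{A. A \<subseteq> {..<n} \<and> K \<union> L \<subseteq> A \<and> card A = q}.
     wsign (A-K) K * wsign (A-L) L * \<psi> (A-K) (A-L))"
proof -
  have "dinterior n \<psi> (Gf n q) K L = (\<Sum>A\<in>Pow {..<n}. if card A = q then dmult \<psi> (dbasis K L) A A else 0)"
    unfolding dinterior_def dinner_def using assms
  proof (simp, intro sum.cong refl)
    fix A assume A: "A \<in> Pow {..<n}"
    show "(\<Sum>B\<in>Pow {..<n}. Gf n q A B * dmult \<psi> (dbasis K L) A B) =
      (if card A = q then dmult \<psi> (dbasis K L) A A else 0)"
      using A by (subst sum_single[where a=A]) (auto simp: Gf_def)
  qed
  also have "\<dots> = (\<Sum>A\<in>Pow {..<n}. if card A = q \<and> K \<union> L \<subseteq> A then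
     wsign (A-K) K * wsign (A-L) L * \<psi> (A-K) (A-L) else 0)"
    by (intro sum.cong refl) (auto simp: DAA finite_subset)
  also have "\<dots> = (\<Sum>A\<in>{A \<in> Pow {..<n}. card A = q \<and> K \<union> L \<subseteq> A}.
     wsign (A-K) K * wsign (A-L) L * \<psi> (A-K) (A-L))"
    by (rule sum.inter_filter[symmetric]) auto
  also have "{A \<in> Pow {..<n}. card A = q \<and> K \<union> L \<subseteq> A} = {A. A \<subseteq> {..<n} \<and> K \<union> L \<subseteq> A \<and> card A = q}" by auto
  finally show ?thesis .
qed

lemma alg: "(a::real)*c*x = t \<Longrightarrow> b*d*y = t \<Longrightarrow> x*x = 1 \<Longrightarrow> y*y = 1 \<Longrightarrow> t*t = 1 \<Longrightarrow> a*b*(c*d) = x*y"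
proof -
  assume h: "a*c*x = t" "b*d*y = t" "x*x = 1" "y*y = 1" "t*t = 1"
  have 1: "a*c = t*x" using h(1,3) by (metis mult.assoc mult.commute mult_1_left)
  have 2: "b*d = t*y" using h(2,4) by (metis mult.assoc mult.commute mult_1_left)
  have "a*b*(c*d) = (a*c)*(b*d)" by (simp add: algebra_simps)
  also have "\<dots> = (t*t)*(x*y)" using 1 2 by (simp add: algebra_simps)
  finally show ?thesis using h(5) by simp
qed

lemma neg1_sq: "((-1::real) ^ k) * ((-1) ^ k) = 1"
  by (simp flip: power_add)

lemma even_exp:
  assumes "even c"
  shows "even (nat \<bar>int c * (x::int)\<bar>)"
proof -
  have "even (int c * x)" using assms by simp
  then have "even \<bar>int c * x\<bar>" by (simp add: abs_if)
  then show ?thesis by (simp add: even_nat_iff)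
qed

lemma key:
  assumes q: "q \<le> n"
    and supp: "\<And>X Y. \<psi> X Y \<noteq> 0 \<Longrightarrow> X \<subseteq> {..<n} \<and> Y \<subseteq> {..<n} \<and> card X = p \<and> card Y = p"
  shows "dstar n (dmult (Gf n (n - q)) \<psi>) = dinterior n \<psi> (Gf n q)"
proof (intro ext)
  fix K L
  let ?N = "{..<n}"
  show "dstar n (dmult (Gf n (n - q)) \<psi>) K L = dinterior n \<psi> (Gf n q) K L"
  proof (cases "K \<subseteq> ?N \<and> L \<subseteq> ?N")
    case False
    then show ?thesis by (auto simp: dstar_def dinterior_def)
  next
    case True
    define Kc where "Kc = ?N - K"
    define Lc where "Lc = ?N - L"
    define s :: real where "s = (-1) ^ nat \<bar>int (card Kc + card Lc) * (int n - int (card Kc + card Lc))\<bar>"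
    have fN: "finite ?N" by simp
    have lhs: "dstar n (dmult (Gf n (n - q)) \<psi>) K L = s * wsign K Kc * wsign L Lc *
        (\<Sum>I\<in>{I. I \<subseteq> Kc \<inter> Lc \<and> card I = n - q}.
          wsign I (Kc-I) * wsign I (Lc-I) * \<psi> (Kc-I) (Lc-I))"
      using True by (simp add: dstar_def Let_def s_def Kc_def Lc_def lhs_sum)
    also have "\<dots> = (\<Sum>I\<in>{I. I \<subseteq> Kc \<inter> Lc \<and> card I = n - q}.
          s * wsign K Kc * wsign L Lc * (wsign I (Kc-I) * wsign I (Lc-I) * \<psi> (Kc-I) (Lc-I)))"
      by (simp add: sum_distrib_left)
    also have "\<dots> = (\<Sum>A\<in>{A. A \<subseteq> ?N \<and> K \<union> L \<subseteq> A \<and> card A = q}.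
     wsign (A-K) K * wsign (A-L) L * \<psi> (A-K) (A-L))"
    proof (rule sum.reindex_bij_witness[where i = "\<lambda>A. ?N - A" and j = "\<lambda>I. ?N - I"])
      fix I assume I: "I \<in> {I. I \<subseteq> Kc \<inter> Lc \<and> card I = n - q}"
      then have IN: "I \<subseteq> ?N" by (auto simp: Kc_def)
      show "?N - (?N - I) = I" using IN by auto
      have "card (?N - I) = n - (n - q)" using IN I by (simp add: card_Diff_subset finite_subset)
      then show "?N - I \<in> {A. A \<subseteq> ?N \<and> K \<union> L \<subseteq> A \<and> card A = q}"
        using I q True by (auto simp: Kc_def Lc_def)
      define X where "X = Kc - I"
      define Y where "Y = Lc - I"
      have eX: "(?N - I) - K = X" "(?N - I) - L = Y" by (auto simp: X_def Y_def Kc_def Lc_def)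
      show "wsign (?N - I - K) K * wsign (?N - I - L) L * \<psi> (?N - I - K) (?N - I - L) =
        s * wsign K Kc * wsign L Lc * (wsign I (Kc-I) * wsign I (Lc-I) * \<psi> (Kc-I) (Lc-I))"
      proof (cases "\<psi> X Y = 0")
        case True
        then show ?thesis unfolding eX X_def Y_def by simp
      next
        case False
        from supp[OF False] have XY: "card X = p" "card Y = p" "X \<subseteq> ?N" "Y \<subseteq> ?N" by auto
        have fI: "finite I" "finite X" "finite Y" "finite K" "finite L"
          using IN XY True by (auto intro: finite_subset[OF _ finite_lessThan])
        have KcU: "Kc = I \<union> X" using I by (auto simp: X_def)
        have LcU: "Lc = I \<union> Y" using I by (auto simp: Y_def)
        have dX: "I \<inter> X = {}" "I \<inter> K = {}" "X \<inter> K = {}" using I by (auto simp: X_def Kc_def)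
        have dY: "I \<inter> Y = {}" "I \<inter> L = {}" "Y \<inter> L = {}" using I by (auto simp: Y_def Lc_def)
        have cKc: "card Kc = card I + card X" using KcU dX fI card_Un_disjoint by blast
        have cLc: "card Lc = card I + card Y" using LcU dY fI card_Un_disjoint by blast
        have cK: "card K = n - card Kc"
        proof -
          have f: "finite K" using True finite_subset[of K ?N] by auto
          have "card Kc = n - card K" using True f by (simp add: Kc_def card_Diff_subset)
          moreover have "card K \<le> n" using True card_mono[of ?N K] by auto
          ultimately show ?thesis by simp
        qed
        have cL: "card L = n - card Lc"
        proof -
          have f: "finite L" using True finite_subset[of L ?N] by auto
          have "card Lc = n - card L" using True f by (simp add: Lc_def card_Diff_subset)
          moreover have "card L \<le> n" using True card_mono[of ?N L] by auto
          ultimately show ?thesis by simp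
        qed
        have ce: "card Kc = card Lc" using cKc cLc XY by simp
        have s1: "s = 1" unfolding s_def
          by (rule neg_one_even_power, rule even_exp) (use ce in simp)
        have XK: "X \<union> K = ?N - I" using True I by (auto simp: X_def Kc_def)
        have YL: "Y \<union> L = ?N - I" using True I by (auto simp: Y_def Lc_def)
        have kK: "wsign K Kc * wsign I X * wsign X K = wsign I (?N - I) * (-1) ^ (card K * card Kc)"
          using sign_key[OF fI(1,2,4) dX] KcU XK by simp
        have kL: "wsign L Lc * wsign I Y * wsign Y L = wsign I (?N - I) * (-1) ^ (card K * card Kc)"
          using sign_key[OF fI(1,3,5) dY] LcU YL cK cL ce by simp
        have tt: "(wsign I (?N - I) * (-1) ^ (card K * card Kc)) * (wsign I (?N - I) * (-1) ^ (card K * card Kc)) = (1::real)"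
          using wsign_sq[of I "?N - I"] neg1_sq[of "card K * card Kc"] by (simp add: algebra_simps)
        have "wsign K Kc * wsign L Lc * (wsign I X * wsign I Y) = wsign X K * wsign Y L"
          by (rule alg[OF kK kL wsign_sq wsign_sq tt])
        then show ?thesis unfolding eX s1 X_def[symmetric] Y_def[symmetric]
          by (simp add: algebra_simps)
      qed
    next
      fix A assume A: "A \<in> {A. A \<subseteq> ?N \<and> K \<union> L \<subseteq> A \<and> card A = q}"
      show "?N - (?N - A) = A" using A by auto
      have "card (?N - A) = n - q" using A finite_subset[of A ?N] by (simp add: card_Diff_subset)
      then show "?N - A \<in> {I. I \<subseteq> Kc \<inter> Lc \<and> card I = n - q}"
        using A by (auto simp: Kc_def Lc_def)
    qed
    also have "\<dots> = dinterior n \<psi> (Gf n q) K L" using True by (simp add: rhs_sum)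
    finally show ?thesis .
  qed
qed

lemma dmult_scale: "dmult (dscale a x) (dscale b y) = dscale (a*b) (dmult x y)"
  unfolding dmult_def dscale_def by (simp add: sum_distrib_left algebra_simps)

lemma general:
  assumes "p + r \<le> n"
  shows "dstar n (dscale (1 / (fact (n - p - r) * fact p)) (dmult (dpow (metric n) (n - p - r)) (dpow (bilform n H) p)))
     = dinterior n (dscale (1 / fact p) (dpow (bilform n H) p)) (dscale (1 / fact (p + r)) (dpow (metric n) (p + r)))"
proof -
  let ?\<psi> = "dscale (1 / fact p) (dpow (bilform n H) p)"
  have e1: "dscale (1 / (fact (n - p - r) * fact p)) (dmult (dpow (metric n) (n - p - r)) (dpow (bilform n H) p))
     = dmult (Gf n (n - (p + r))) ?\<psi>"
    by (simp add: G_eq[symmetric] dmult_scale diff_diff_eq)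
  have supp: "X \<subseteq> {..<n} \<and> Y \<subseteq> {..<n} \<and> card X = p \<and> card Y = p" if "?\<psi> X Y \<noteq> 0" for X Y
    using that hpow_supp[of n H p X Y] by (auto simp: dscale_def)
  show ?thesis unfolding e1 G_eq using key[OF assms supp] by blast
qed

theorem mainTheorem12:
  fixes n :: nat and H :: "nat \<Rightarrow> nat \<Rightarrow> real"
  defines "g \<equiv> metric n" and "h \<equiv> bilform n H"
  shows "(\<forall>p. p \<le> n \<longrightarrow>
            dstar n (dscale (1 / (fact (n - p) * fact p)) (dmult (dpow g (n - p)) (dpow h p)))
          = dinterior n (dscale (1 / fact p) (dpow h p)) (dscale (1 / fact p) (dpow g p)))
       \<and> (\<forall>p. p + 1 \<le> n \<longrightarrow>
            dstar n (dscale (1 / (fact (n - p - 1) * fact p)) (dmult (dpow g (n - p - 1)) (dpow h p)))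
          = dinterior n (dscale (1 / fact p) (dpow h p)) (dscale (1 / fact (p + 1)) (dpow g (p + 1))))
       \<and> (\<forall>r p. p + r \<le> n \<longrightarrow>
            dstar n (dscale (1 / (fact (n - p - r) * fact p)) (dmult (dpow g (n - p - r)) (dpow h p)))
          = dinterior n (dscale (1 / fact p) (dpow h p)) (dscale (1 / fact (p + r)) (dpow g (p + r))))"
  unfolding g_def h_def
  using general[where r=0] general[where r=1] general by auto

end
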